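(* Let $\lambda,\mu,\nu>0$ and equip $S^3$ with the generalised Lorentzian Berger metric $h$ described in the context, with $h$-orthonormal left-invariant frame $X,Y,Z$. Then $$K(X,Y)=h(R(X,Y)Y,X)=\frac{(\lambda^2+\mu^2-\nu^2)^2+4\nu^2(\mu^2-\nu^2)}{(\lambda\mu\nu)^2},$$ $$K(X,Z)=h(R(X,Z)Z,X)=\frac{(\lambda^2-\mu^2+\nu^2)^2-4\mu^2(\mu^2-\nu^2)}{(\lambda\mu\nu)^2},$$ $$K(Y,Z)=h(R(Y,Z)Z,Y)=\frac{(\lambda^2+\mu^2+\nu^2)^2+2(\lambda^4-\mu^4-\nu^4)}{(\lambda\mu\nu)^2}.$$
   Context: $S^3=\{(z,w)\in\mathbb C^2: |z|^2+|w|^2=1\}$ is a Lie group with multiplication $(z_1,w_1)\cdot(z_2,w_2)=(z_1z_2-\bar w_1w_2,\ \bar z_1w_2+w_1z_2)$ and inverse $(z,w)^{-1}=(\bar z,-w)$; the same formula defines $p\cdot v$ for $v\in\mathbb C^2$. Let $\langle (z_1,w_1),(z_2,w_2)\rangle=\mathrm{Re}(z_1\bar z_2+w_1\bar w_2)$. The Lorentzian metric is $h_p(A,B)=-\lambda^2\langle p^{-1}A,(i,0)\rangle\langle p^{-1}B,(i,0)\rangle+\mu^2\langle p^{-1}A,(0,-1)\rangle\langle p^{-1}B,(0,-1)\rangle+\nu^2\langle p^{-1}A,(0,i)\rangle\langle p^{-1}B,(0,i)\rangle+\langle p^{-1}A,(1,0)\rangle\langle p^{-1}B,(1,0)\rangle$.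 The frame is $X_p=\lambda^{-1}p\cdot(i,0)$, $Y_p=\mu^{-1}p\cdot(0,-1)$, $Z_p=\nu^{-1}p\cdot(0,i)$, with $h(X,X)=-1$, $h(Y,Y)=h(Z,Z)=1$. $R(A,B)C=\nabla_A\nabla_BC-\nabla_B\nabla_AC-\nabla_{[A,B]}C$ for the Levi-Civita connection $\nabla$ of $h$; the paper denotes the quantities $h(R(A,B)B,A)$ for frame vectors by $K(A,B)$. *)

theory Defs
  imports "HOL-Analysis.Analysis"
begin

type_synonym C2 = "complex \<times> complex"

definition qmul :: "C2 \<Rightarrow> C2 \<Rightarrow> C2" where
  "qmul p q = (fst p * fst q - cnj (snd p) * snd q, cnj (fst p) * snd q + snd p * fst q)"

definition qinv :: "C2 \<Rightarrow> C2" where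
  "qinv p = (cnj (fst p), - snd p)"

definition ip :: "C2 \<Rightarrow> C2 \<Rightarrow> real" where
  "ip a b = Re (fst a * cnj (fst b) + snd a * cnj (snd b))"

definition S3 :: "C2 set" where
  "S3 = {p. cmod (fst p) ^ 2 + cmod (snd p) ^ 2 = 1}"

definition hmet :: "real \<Rightarrow> real \<Rightarrow> real \<Rightarrow> C2 \<Rightarrow> C2 \<Rightarrow> C2 \<Rightarrow> real" where
  "hmet la m n p A B =
     - (la^2) * ip (qmul (qinv p) A) (\<i>, 0) * ip (qmul (qinv p) B) (\<i>, 0)
     + (m^2) * ip (qmul (qinv p) A) (0, -1) * ip (qmul (qinv p) B) (0, -1)
     + (n^2) * ip (qmul (qinv p) A) (0, \<i>) * ip (qmul (qinv p) B) (0, \<i>)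
     + ip (qmul (qinv p) A) (1, 0) * ip (qmul (qinv p) B) (1, 0)"

definition frameX :: "real \<Rightarrow> C2 \<Rightarrow> C2" where "frameX l p = (1 / l) *\<^sub>R qmul p (\<i>, 0)"
definition frameY :: "real \<Rightarrow> C2 \<Rightarrow> C2" where "frameY m p = (1 / m) *\<^sub>R qmul p (0, -1)"
definition frameZ :: "real \<Rightarrow> C2 \<Rightarrow> C2" where "frameZ n p = (1 / n) *\<^sub>R qmul p (0, \<i>)"

text \<open>C^infinity maps between normed spaces: all iterated directional (Frechet) derivatives exist.\<close>
definition smooth_map :: "('a::real_normed_vector \<Rightarrow> 'b::real_normed_vector) \<Rightarrow> bool" where
  "smooth_map f \<longleftrightarrow> (\<exists>F. f \<in> F \<and>
      (\<forall>g\<in>F. (\<forall>x. g differentiable (at x)) \<and>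
               (\<forall>v. (\<lambda>x. frechet_derivative g (at x) v) \<in> F)))"

definition dir :: "(C2 \<Rightarrow> C2) \<Rightarrow> (C2 \<Rightarrow> 'b::real_normed_vector) \<Rightarrow> C2 \<Rightarrow> 'b" where
  "dir A f p = frechet_derivative f (at p) (A p)"

text \<open>Smooth vector fields on S^3, represented by smooth maps C^2 -> C^2 tangent to S^3 along S^3.\<close>
definition tangent_field :: "(C2 \<Rightarrow> C2) \<Rightarrow> bool" where
  "tangent_field V \<longleftrightarrow> smooth_map V \<and> (\<forall>p\<in>S3. ip (V p) p = 0)"

definition bracket :: "(C2 \<Rightarrow> C2) \<Rightarrow> (C2 \<Rightarrow> C2) \<Rightarrow> C2 \<Rightarrow> C2" where
  "bracket A B p = dir A B p - dir B A p"

definition levi_civita :: "real \<Rightarrow> real \<Rightarrow> real \<Rightarrow>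
    ((C2 \<Rightarrow> C2) \<Rightarrow> (C2 \<Rightarrow> C2) \<Rightarrow> C2 \<Rightarrow> C2) \<Rightarrow> bool" where
  "levi_civita l m n nabla \<longleftrightarrow>
    (\<forall>A B. tangent_field A \<longrightarrow> tangent_field B \<longrightarrow> tangent_field (nabla A B)) \<and>
    (\<forall>A B C f. tangent_field A \<longrightarrow> tangent_field B \<longrightarrow> tangent_field C \<longrightarrow>
        smooth_map (f :: C2 \<Rightarrow> real) \<longrightarrow> (\<forall>p\<in>S3.
       nabla (\<lambda>q. A q + B q) C p = nabla A C p + nabla B C p \<and>
       nabla (\<lambda>q. f q *\<^sub>R A q) C p = f p *\<^sub>R nabla A C p \<and>
       nabla A (\<lambda>q. B q + C q) p = nabla A B p + nabla A C p \<and>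
       nabla A (\<lambda>q. f q *\<^sub>R B q) p = dir A f p *\<^sub>R B p + f p *\<^sub>R nabla A B p \<and>
       nabla A B p - nabla B A p = bracket A B p \<and>
       dir A (\<lambda>q. hmet l m n q (B q) (C q)) p =
          hmet l m n p (nabla A B p) (C p) + hmet l m n p (B p) (nabla A C p)))"

definition curv :: "((C2 \<Rightarrow> C2) \<Rightarrow> (C2 \<Rightarrow> C2) \<Rightarrow> C2 \<Rightarrow> C2) \<Rightarrow>
    (C2 \<Rightarrow> C2) \<Rightarrow> (C2 \<Rightarrow> C2) \<Rightarrow> (C2 \<Rightarrow> C2) \<Rightarrow> C2 \<Rightarrow> C2" where
  "curv nabla A B C p = nabla A (nabla B C) p - nabla B (nabla A C) p - nabla (bracket A B) C p"

end

theory Submission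
  imports Defs
begin


definition L :: "C2 \<Rightarrow> C2 \<Rightarrow> C2" where "L v = (\<lambda>q. qmul q v)"

lemma ip_inner: "ip a b = inner a b"
  by (simp add: ip_def inner_prod_def inner_complex_def)

lemma S3_ip: "p \<in> S3 \<longleftrightarrow> ip p p = 1"
  by (simp add: S3_def ip_def complex_mult_cnj power2_eq_square cmod_def)

lemma qmul_assoc: "qmul (qmul q a) b = qmul q (qmul a b)"
  by (simp add: qmul_def algebra_simps)

lemma qmul_inv_cancel: assumes "p \<in> S3" shows "qmul (qinv p) (qmul p v) = v"
proof -
  obtain p1 p2 where p: "p = (p1,p2)" by (cases p)
  have "cnj p1 * p1 + cnj p2 * p2 = 1" using assms
    by (simp add: S3_def p complex_norm_square mult.commute flip: of_real_add)
      (metis of_real_1 of_real_add of_real_power complex_norm_square mult.commute)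
  then show ?thesis
    apply (cases v) apply (simp add: qmul_def qinv_def p)
    apply (simp add: algebra_simps)
    by (metis (no_types, lifting) add.commute distrib_left mult.assoc mult.commute mult_1 ring_class.ring_distribs(2))
qed




lemma qmul_add1: "qmul (x + y) v = qmul x v + qmul y v"
  by (simp add: qmul_def algebra_simps)
lemma qmul_scale1: "qmul (r *\<^sub>R x) v = r *\<^sub>R qmul x v"
  by (simp add: qmul_def algebra_simps scaleR_conv_of_real)
lemma qmul_diff2: "qmul q (a - b) = qmul q a - qmul q b"
  by (simp add: qmul_def algebra_simps)
lemma qmul_scale2: "qmul q (r *\<^sub>R a) = r *\<^sub>R qmul q a"
  by (simp add: qmul_def algebra_simps scaleR_conv_of_real)

lemma L_linear: "linear (L v)"
  by (rule linearI) (simp_all add: L_def qmul_add1 qmul_scale1)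

lemma L_bl: "bounded_linear (L v)"
  using L_linear linear_conv_bounded_linear by blast

lemma L_deriv: "(L v has_derivative L v) (at x)"
  using L_bl bounded_linear_imp_has_derivative by blast

lemma L_fd: "frechet_derivative (L v) (at x) = L v"
  using L_deriv frechet_derivative_at by metis

lemma const_fd: "frechet_derivative (\<lambda>x. c) (at x) = (\<lambda>_. 0)"
  using has_derivative_const frechet_derivative_at by metis

lemma L_diff: "L v differentiable (at x)"
  using L_deriv differentiable_def by blast
lemma const_diff: "(\<lambda>x. c) differentiable (at x)"
  by simp
lemma smooth_const: "smooth_map (\<lambda>x. c)"
  unfolding smooth_map_def
  apply (rule exI[of _ "range (\<lambda>c x. c)"])
  by (auto simp: const_fd)

lemma smooth_L: "smooth_map (L v)"
  unfolding smooth_map_def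
  apply (rule exI[of _ "insert (L v) (range (\<lambda>c x. c))"])
  using L_diff const_diff by (auto simp: const_fd L_fd simp del: split_paired_All)

lemma ip_L: "ip (L v q) q = ip q q * Re (fst v)"
  apply (cases q, cases v)
  apply (simp add: L_def qmul_def ip_def algebra_simps complex_mult_cnj power2_eq_square)
  done

lemma tangent_L: "Re (fst v) = 0 \<Longrightarrow> tangent_field (L v)"
  by (simp add: tangent_field_def smooth_L ip_L)

lemma bracket_L: "bracket (L a) (L b) = L (qmul a b - qmul b a)"
  by (rule ext) (simp add: bracket_def dir_def L_fd, simp add: L_def qmul_assoc qmul_diff2)




lemma d_fst: "W differentiable F \<Longrightarrow> (\<lambda>q. fst (W q)) differentiable F"
  unfolding differentiable_def by (blast intro: has_derivative_fst)
lemma d_snd: "W differentiable F \<Longrightarrow> (\<lambda>q. snd (W q)) differentiable F"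
  unfolding differentiable_def by (blast intro: has_derivative_snd)
lemma d_Re: "(W::_\<Rightarrow>complex) differentiable F \<Longrightarrow> (\<lambda>q. Re (W q)) differentiable F"
  unfolding differentiable_def by (blast intro: has_derivative_Re)
lemma d_Im: "(W::_\<Rightarrow>complex) differentiable F \<Longrightarrow> (\<lambda>q. Im (W q)) differentiable F"
  unfolding differentiable_def by (blast intro: has_derivative_Im)
lemma d_cnj: "(W::_\<Rightarrow>complex) differentiable F \<Longrightarrow> (\<lambda>q. cnj (W q)) differentiable F"
  unfolding differentiable_def by (blast intro: has_derivative_cnj)

lemma hmet_diff:
  assumes "W differentiable (at p)" "V differentiable (at p)"
  shows "(\<lambda>q. hmet l m n q (W q) (V q)) differentiable (at p)"
proof -
  have q1: "(\<lambda>q::C2. q) differentiable (at p)" by simp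
  show ?thesis
    unfolding hmet_def qmul_def qinv_def ip_def
    by (intro derivative_intros d_fst d_snd d_Re d_Im d_cnj assms q1)
qed

lemma tangent_deriv_zero:
  fixes g :: "C2 \<Rightarrow> real"
  assumes gd: "g differentiable (at p)" and p: "p \<in> S3" and c: "\<forall>q\<in>S3. g q = c" and v: "ip v p = 0"
  shows "frechet_derivative g (at p) v = 0"
proof -
  let ?D = "frechet_derivative g (at p)"
  have D: "(g has_derivative ?D) (at p)" using gd frechet_derivative_works by blast
  have lin: "linear ?D" using D has_derivative_linear by blast
  show ?thesis
  proof (cases "v = 0")
    case True then show ?thesis using lin linear_0 by blast
  next
    case False
    define u where "u = (1 / norm v) *\<^sub>R v"
    have uu: "inner u u = 1" using False
      by (simp add: u_def inner_commute power2_norm_eq_inner[symmetric] power2_eq_square)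
    have pp: "inner p p = 1" using p S3_ip ip_inner by metis
    have pu: "inner p u = 0" using v by (simp add: u_def ip_inner inner_commute)
    define \<gamma> where "\<gamma> t = cos t *\<^sub>R p + sin t *\<^sub>R u" for t :: real
    have gS: "\<gamma> t \<in> S3" for t
    proof -
      have "inner (\<gamma> t) (\<gamma> t) = (cos t)^2 * inner p p + (sin t)^2 * inner u u + 2 * sin t * cos t * inner p u"
        by (simp add: \<gamma>_def inner_add_left inner_add_right inner_commute power2_eq_square algebra_simps)
      also have "\<dots> = 1" using uu pp pu by simp
      finally show ?thesis using S3_ip ip_inner by metis
    qed
    have g0: "\<gamma> 0 = p" by (simp add: \<gamma>_def)
    have gder: "(\<gamma> has_derivative (\<lambda>t. t *\<^sub>R u)) (at 0)"
      unfolding \<gamma>_def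
      by (auto intro!: derivative_eq_intros)
    have "((g \<circ> \<gamma>) has_derivative (?D \<circ> (\<lambda>t. t *\<^sub>R u))) (at 0)"
      using diff_chain_at[OF gder] D g0 by simp
    moreover have "g \<circ> \<gamma> = (\<lambda>t. c)" using gS c by auto
    ultimately have "(?D \<circ> (\<lambda>t. t *\<^sub>R u)) = (\<lambda>_. 0)"
      using has_derivative_const has_derivative_unique by metis
    then have Du: "?D u = 0" by (metis comp_apply scaleR_one)
    have "v = norm v *\<^sub>R u" using False by (simp add: u_def)
    then have "?D v = norm v *\<^sub>R ?D u" using lin by (metis linear_scale)
    then show ?thesis using Du by simp
  qed
qed




definition lb :: "C2 \<Rightarrow> C2 \<Rightarrow> C2" where "lb a b = qmul a b - qmul b a"

definition G :: "real \<Rightarrow> real \<Rightarrow> real \<Rightarrow> C2 \<Rightarrow> C2 \<Rightarrow> C2 \<Rightarrow> real" where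
  "G l m n a b c = (hmet l m n (1,0) (lb a b) c - hmet l m n (1,0) (lb b c) a + hmet l m n (1,0) (lb c a) b) / 2"

lemma hmet_inv: assumes "p \<in> S3" shows "hmet l m n p (qmul p x) (qmul p y) = hmet l m n (1,0) x y"
proof -
  have "qmul (qinv (1,0)) z = z" for z by (cases z) (simp add: qmul_def qinv_def)
  then show ?thesis by (simp add: hmet_def qmul_inv_cancel[OF assms])
qed

lemma hmet_sym: "hmet l m n p x y = hmet l m n p y x"
  by (simp add: hmet_def algebra_simps)

lemma ip_diff1: "ip (x - y) z = ip x z - ip y z"
  by (simp add: ip_def algebra_simps)
lemma ip_scale1: "ip (r *\<^sub>R x) z = r * ip x z"
  by (simp add: ip_def algebra_simps scaleR_conv_of_real)

lemma hmet_diff1: "hmet l m n p (x - y) z = hmet l m n p x z - hmet l m n p y z"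
  by (simp add: hmet_def qmul_diff2 ip_diff1 algebra_simps)
lemma hmet_scale1: "hmet l m n p (r *\<^sub>R x) z = r * hmet l m n p x z"
  by (simp add: hmet_def qmul_scale2 ip_scale1 algebra_simps)

lemma LC_ax:
  assumes lc: "levi_civita l m n nabla"
  shows "\<And>A B. tangent_field A \<Longrightarrow> tangent_field B \<Longrightarrow> tangent_field (nabla A B)"
  and "\<And>A B C f p. tangent_field A \<Longrightarrow> tangent_field B \<Longrightarrow> tangent_field C \<Longrightarrow>
        smooth_map (f :: C2 \<Rightarrow> real) \<Longrightarrow> p \<in> S3 \<Longrightarrow>
       nabla (\<lambda>q. f q *\<^sub>R A q) C p = f p *\<^sub>R nabla A C p"
  and "\<And>A B C p. tangent_field A \<Longrightarrow> tangent_field B \<Longrightarrow> tangent_field C \<Longrightarrow> p \<in> S3 \<Longrightarrow>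
       dir A (\<lambda>q. hmet l m n q (B q) (C q)) p =
          hmet l m n p (nabla A B p) (C p) + hmet l m n p (B p) (nabla A C p)"
  using lc unfolding levi_civita_def by (blast, blast, meson smooth_const)

lemma koszul:
  assumes lc: "levi_civita l m n nabla" and A: "tangent_field A" and B: "tangent_field B"
    and C: "tangent_field C" and q: "q \<in> S3"
  shows "2 * hmet l m n q (nabla A B q) (C q) =
     dir A (\<lambda>q. hmet l m n q (B q) (C q)) q + dir B (\<lambda>q. hmet l m n q (C q) (A q)) q
     - dir C (\<lambda>q. hmet l m n q (A q) (B q)) q
     + hmet l m n q (bracket A B q) (C q) - hmet l m n q (bracket B C q) (A q)
     + hmet l m n q (bracket C A q) (B q)"
proof -
  have ax: "\<And>A B C. tangent_field A \<Longrightarrow> tangent_field B \<Longrightarrow> tangent_field C \<Longrightarrow>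
       nabla A B q - nabla B A q = bracket A B q \<and>
       dir A (\<lambda>q. hmet l m n q (B q) (C q)) q =
          hmet l m n q (nabla A B q) (C q) + hmet l m n q (B q) (nabla A C q)"
    using lc q unfolding levi_civita_def
    by (meson smooth_const)
  have t1: "hmet l m n q (bracket A B q) (C q) = hmet l m n q (nabla A B q) (C q) - hmet l m n q (nabla B A q) (C q)"
    using ax[OF A B C] by (metis hmet_diff1)
  have t2: "hmet l m n q (bracket B C q) (A q) = hmet l m n q (nabla B C q) (A q) - hmet l m n q (nabla C B q) (A q)"
    using ax[OF B C A] by (metis hmet_diff1)
  have t3: "hmet l m n q (bracket C A q) (B q) = hmet l m n q (nabla C A q) (B q) - hmet l m n q (nabla A C q) (B q)"
    using ax[OF C A B] by (metis hmet_diff1)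
  have c1: "dir A (\<lambda>q. hmet l m n q (B q) (C q)) q = hmet l m n q (nabla A B q) (C q) + hmet l m n q (nabla A C q) (B q)"
    using ax[OF A B C] hmet_sym by metis
  have c2: "dir B (\<lambda>q. hmet l m n q (C q) (A q)) q = hmet l m n q (nabla B C q) (A q) + hmet l m n q (nabla B A q) (C q)"
    using ax[OF B C A] hmet_sym by metis
  have c3: "dir C (\<lambda>q. hmet l m n q (A q) (B q)) q = hmet l m n q (nabla C A q) (B q) + hmet l m n q (nabla C B q) (A q)"
    using ax[OF C A B] hmet_sym by metis
  show ?thesis using t1 t2 t3 c1 c2 c3 by linarith
qed




lemma dir_L_zero:
  assumes "tangent_field W" "Re (fst a) = 0" "q \<in> S3" "\<forall>q\<in>S3. hmet l m n q (W q) (V q) = c"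
    "\<forall>x. V differentiable (at x)"
  shows "dir (L a) (\<lambda>q. hmet l m n q (W q) (V q)) q = 0"
proof -
  obtain F where "W \<in> F" "\<forall>g\<in>F. \<forall>x. g differentiable (at x)"
    using assms(1) unfolding tangent_field_def smooth_map_def by blast
  then have "W differentiable (at q)" by blast
  then have "(\<lambda>q. hmet l m n q (W q) (V q)) differentiable (at q)"
    using hmet_diff assms(5) by blast
  moreover have "ip (L a q) q = 0" using ip_L assms(2) by simp
  ultimately show ?thesis unfolding dir_def
    using tangent_deriv_zero assms(3,4) by blast
qed

lemma koszul_L:
  assumes lc: "levi_civita l m n nabla" and a: "Re (fst a) = 0" and b: "Re (fst b) = 0"
    and c: "Re (fst c) = 0" and q: "q \<in> S3"
  shows "hmet l m n q (nabla (L a) (L b) q) (L c q) = G l m n a b c"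
proof -
  have T: "tangent_field (L x)" if "Re (fst x) = 0" for x using tangent_L that by blast
  have K: "\<forall>q\<in>S3. hmet l m n q (L x q) (L y q) = hmet l m n (1,0) x y" for x y
    by (simp add: L_def hmet_inv)
  have d: "dir (L x) (\<lambda>q. hmet l m n q (L y q) (L z q)) q = 0" if "Re (fst x) = 0" "Re (fst y) = 0" for x y z
    using dir_L_zero[OF T[OF that(2)] that(1) q K] L_diff by blast
  have br: "hmet l m n q (bracket (L x) (L y) q) (L z q) = hmet l m n (1,0) (lb x y) z" for x y z
    using K q by (simp add: bracket_L lb_def)
  show ?thesis
    using koszul[OF lc T[OF a] T[OF b] T[OF c] q] d[OF a b] d[OF b c] d[OF c a] br
    by (simp add: G_def)
qed




definition vX :: "real \<Rightarrow> C2" where "vX l = (Complex 0 (1/l), 0)"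
definition vY :: "real \<Rightarrow> C2" where "vY m = (0, Complex (-1/m) 0)"
definition vZ :: "real \<Rightarrow> C2" where "vZ n = (0, Complex 0 (1/n))"

lemma frameX_L: "frameX l = L (vX l)"
  by (rule ext) (simp add: frameX_def L_def vX_def qmul_def scaleR_conv_of_real complex_eq_iff)
lemma frameY_L: "frameY m = L (vY m)"
  by (rule ext) (simp add: frameY_def L_def vY_def qmul_def scaleR_conv_of_real complex_eq_iff)
lemma frameZ_L: "frameZ n = L (vZ n)"
  by (rule ext) (simp add: frameZ_def L_def vZ_def qmul_def scaleR_conv_of_real complex_eq_iff)

lemma hmet_via1: "hmet l m n p u w = hmet l m n (1,0) (qmul (qinv p) u) (qmul (qinv p) w)"
proof -
  have "qmul (qinv (1,0)) z = z" for z by (cases z) (simp add: qmul_def qinv_def)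
  then show ?thesis by (simp add: hmet_def)
qed

lemma expansion:
  assumes p: "p \<in> S3" and u: "ip u p = 0" and pos: "l > 0" "m > 0" "n > 0"
  shows "hmet l m n p u w =
     - hmet l m n p u (L (vX l) p) * hmet l m n p w (L (vX l) p)
     + hmet l m n p u (L (vY m) p) * hmet l m n p w (L (vY m) p)
     + hmet l m n p u (L (vZ n) p) * hmet l m n p w (L (vZ n) p)"
proof -
  define x where "x = qmul (qinv p) u"
  define y where "y = qmul (qinv p) w"
  have e: "hmet l m n p z (L v p) = hmet l m n (1,0) (qmul (qinv p) z) v" for z v
    using hmet_via1[of l m n p z "L v p"] by (simp add: L_def qmul_inv_cancel[OF p])
  have x0: "Re (fst x) = 0" using u
    by (cases p, cases u) (simp add: x_def ip_def qmul_def qinv_def algebra_simps)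
  show ?thesis
    unfolding e hmet_via1[of l m n p u w] x_def[symmetric] y_def[symmetric]
    using x0 pos
    by (cases x, cases y) (simp add: hmet_def qmul_def qinv_def ip_def vX_def vY_def vZ_def
      power2_eq_square field_simps)
qed




definition SS :: "real \<Rightarrow> real \<Rightarrow> real \<Rightarrow> C2 \<Rightarrow> C2 \<Rightarrow> C2 \<Rightarrow> C2 \<Rightarrow> real" where
  "SS l m n x y z w = - G l m n x y (vX l) * G l m n z w (vX l) + G l m n x y (vY m) * G l m n z w (vY m)
     + G l m n x y (vZ n) * G l m n z w (vZ n)"

lemma tvX: "Re (fst (vX l)) = 0" by (simp add: vX_def)
lemma tvY: "Re (fst (vY l)) = 0" by (simp add: vY_def)
lemma tvZ: "Re (fst (vZ l)) = 0" by (simp add: vZ_def)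

lemma hmet_nabla_nabla:
  assumes lc: "levi_civita l m n nabla" and a: "Re (fst a) = 0" and b: "Re (fst b) = 0"
    and c: "Re (fst c) = 0" and p: "p \<in> S3" and pos: "l > 0" "m > 0" "n > 0"
  shows "hmet l m n p (nabla (L a) (nabla (L b) (L c)) p) (L a p) = - SS l m n b c a a"
proof -
  have T: "tangent_field (L x)" if "Re (fst x) = 0" for x using tangent_L that by blast
  define W where "W = nabla (L b) (L c)"
  have TW: "tangent_field W" unfolding W_def using LC_ax(1)[OF lc T[OF b] T[OF c]] .
  have "dir (L a) (\<lambda>q. hmet l m n q (W q) (L a q)) p = 0"
    using dir_L_zero[OF TW a p, of l m n "L a" "G l m n b c a"] koszul_L[OF lc b c a] L_diff
    by (simp add: W_def)
  then have e1: "hmet l m n p (nabla (L a) W p) (L a p) = - hmet l m n p (W p) (nabla (L a) (L a) p)"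
    using LC_ax(3)[OF lc T[OF a] TW T[OF a] p] by simp
  have up: "ip (W p) p = 0" using TW p by (simp add: tangent_field_def)
  show ?thesis
    unfolding W_def[symmetric] e1 expansion[OF p up pos, of "nabla (L a) (L a) p"]
    using koszul_L[OF lc b c tvX p] koszul_L[OF lc b c tvY p] koszul_L[OF lc b c tvZ p]
      koszul_L[OF lc a a tvX p] koszul_L[OF lc a a tvY p] koszul_L[OF lc a a tvZ p]
    by (simp add: W_def SS_def hmet_sym[of l m n p "nabla (L a) (L a) p"])
qed

lemma curv_L:
  assumes lc: "levi_civita l m n nabla" and a: "Re (fst a) = 0" and b: "Re (fst b) = 0"
    and v: "Re (fst v) = 0" and ab: "lb a b = k *\<^sub>R v" and p: "p \<in> S3" and pos: "l > 0" "m > 0" "n > 0"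
  shows "hmet l m n p (curv nabla (L a) (L b) (L b) p) (L a p) =
     - SS l m n b b a a + SS l m n a b b a - k * G l m n v b a"
proof -
  have T: "tangent_field (L x)" if "Re (fst x) = 0" for x using tangent_L that by blast
  have br: "bracket (L a) (L b) = (\<lambda>q. (\<lambda>_. k) q *\<^sub>R L v q)"
    unfolding bracket_L lb_def[symmetric] ab by (simp add: L_def qmul_scale2)
  have t3: "nabla (bracket (L a) (L b)) (L b) p = k *\<^sub>R nabla (L v) (L b) p"
    unfolding br using LC_ax(2)[OF lc T[OF v] T[OF b] T[OF b] smooth_const p] by simp
  have t2: "hmet l m n p (nabla (L b) (nabla (L a) (L b)) p) (L a p) = - SS l m n a b b a"
  proof -
    define W where "W = nabla (L a) (L b)"
    have TW: "tangent_field W" unfolding W_def using LC_ax(1)[OF lc T[OF a] T[OF b]] .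
    have "dir (L b) (\<lambda>q. hmet l m n q (W q) (L a q)) p = 0"
      using dir_L_zero[OF TW b p, of l m n "L a" "G l m n a b a"] koszul_L[OF lc a b a] L_diff
      by (simp add: W_def)
    then have e1: "hmet l m n p (nabla (L b) W p) (L a p) = - hmet l m n p (W p) (nabla (L b) (L a) p)"
      using LC_ax(3)[OF lc T[OF b] TW T[OF a] p] by simp
    have up: "ip (W p) p = 0" using TW p by (simp add: tangent_field_def)
    show ?thesis
      unfolding W_def[symmetric] e1 expansion[OF p up pos, of "nabla (L b) (L a) p"]
      using koszul_L[OF lc a b tvX p] koszul_L[OF lc a b tvY p] koszul_L[OF lc a b tvZ p]
        koszul_L[OF lc b a tvX p] koszul_L[OF lc b a tvY p] koszul_L[OF lc b a tvZ p]
      by (simp add: W_def SS_def hmet_sym[of l m n p "nabla (L b) (L a) p"])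
  qed
  show ?thesis
    unfolding curv_def hmet_diff1 t3 hmet_scale1 t2 hmet_nabla_nabla[OF lc a b b p pos]
    using koszul_L[OF lc v b a p] by simp
qed




lemmas unf = SS_def G_def lb_def hmet_def qmul_def qinv_def ip_def vX_def vY_def vZ_def

lemma lbXY: "l > 0 \<Longrightarrow> m > 0 \<Longrightarrow> n > 0 \<Longrightarrow> lb (vX l) (vY m) = (2*n/(l*m)) *\<^sub>R vZ n"
  by (simp add: lb_def qmul_def vX_def vY_def vZ_def complex_eq_iff scaleR_conv_of_real)
lemma lbXZ: "l > 0 \<Longrightarrow> m > 0 \<Longrightarrow> n > 0 \<Longrightarrow> lb (vX l) (vZ n) = (-2*m/(l*n)) *\<^sub>R vY m"
  by (simp add: lb_def qmul_def vX_def vY_def vZ_def complex_eq_iff scaleR_conv_of_real)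
lemma lbYZ: "l > 0 \<Longrightarrow> m > 0 \<Longrightarrow> n > 0 \<Longrightarrow> lb (vY m) (vZ n) = (2*l/(m*n)) *\<^sub>R vX l"
  by (simp add: lb_def qmul_def vX_def vY_def vZ_def complex_eq_iff scaleR_conv_of_real)

lemma K1: assumes "l > 0" "m > 0" "n > 0"
  shows "- SS l m n (vY m) (vY m) (vX l) (vX l) + SS l m n (vX l) (vY m) (vY m) (vX l)
     - (2*n/(l*m)) * G l m n (vZ n) (vY m) (vX l) = ((l^2 + m^2 - n^2)^2 + 4 * n^2 * (m^2 - n^2)) / (l * m * n)^2"
  using assms by (simp add: unf) (simp add: field_simps power2_eq_square)


lemma K2: assumes "l > 0" "m > 0" "n > 0"
  shows "- SS l m n (vZ n) (vZ n) (vX l) (vX l) + SS l m n (vX l) (vZ n) (vZ n) (vX l)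
     - (-2*m/(l*n)) * G l m n (vY m) (vZ n) (vX l) = ((l^2 - m^2 + n^2)^2 - 4 * m^2 * (m^2 - n^2)) / (l * m * n)^2"
  using assms by (simp add: unf) (simp add: field_simps power2_eq_square)

lemma K3: assumes "l > 0" "m > 0" "n > 0"
  shows "- SS l m n (vZ n) (vZ n) (vY m) (vY m) + SS l m n (vY m) (vZ n) (vZ n) (vY m)
     - (2*l/(m*n)) * G l m n (vX l) (vZ n) (vY m) = ((l^2 + m^2 + n^2)^2 + 2 * (l^4 - m^4 - n^4)) / (l * m * n)^2"
  using assms apply (simp add: unf)
  apply (simp add: power2_eq_square power4_eq_xxxx)
  apply (simp add: field_simps)
  done

theorem mainTheorem4:
  fixes l m n :: real
    and nabla :: "(C2 \<Rightarrow> C2) \<Rightarrow> (C2 \<Rightarrow> C2) \<Rightarrow> C2 \<Rightarrow> C2"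
    and p :: C2
  assumes "l > 0" and "m > 0" and "n > 0"
    and "levi_civita l m n nabla"
    and "p \<in> S3"
  shows "(hmet l m n p (curv nabla (frameX l) (frameY m) (frameY m) p) (frameX l p)
           = ((l^2 + m^2 - n^2)^2 + 4 * n^2 * (m^2 - n^2)) / (l * m * n)^2 \<and>
         hmet l m n p (curv nabla (frameX l) (frameZ n) (frameZ n) p) (frameX l p)
           = ((l^2 - m^2 + n^2)^2 - 4 * m^2 * (m^2 - n^2)) / (l * m * n)^2 \<and>
         hmet l m n p (curv nabla (frameY m) (frameZ n) (frameZ n) p) (frameY m p)
           = ((l^2 + m^2 + n^2)^2 + 2 * (l^4 - m^4 - n^4)) / (l * m * n)^2)"
  unfolding frameX_L frameY_L frameZ_L
  using curv_L[OF assms(4) tvX tvY tvZ lbXY[OF assms(1-3)] assms(5) assms(1-3)]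
    curv_L[OF assms(4) tvX tvZ tvY lbXZ[OF assms(1-3)] assms(5) assms(1-3)]
    curv_L[OF assms(4) tvY tvZ tvX lbYZ[OF assms(1-3)] assms(5) assms(1-3)]
    K1[OF assms(1-3)] K2[OF assms(1-3)] K3[OF assms(1-3)]
  by simp

end
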